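(* In the situation of Theorem 3.2 (finite-dimensional two-step solvable $\mathfrak g=\mathfrak g^\infty\rtimes\mathfrak n$ over a field of characteristic zero, an LR-structure $\cdot$ on $\mathfrak n$ with $\mathfrak n\cdot\mathfrak n\subseteq[\mathfrak n,\mathfrak n]$), one has $\mathfrak n^i\cdot\mathfrak n^j\subseteq\mathfrak n^{i+j}$ for all $i,j\ge1$, and the LR-structure $(a,x)\star(b,y)=([x,b],x\cdot y)$ on $\mathfrak g$ ($a,b\in\mathfrak g^\infty$, $x,y\in\mathfrak n$) is complete.
   Context: Lower central series: $\mathfrak n^1=\mathfrak n$, $\mathfrak n^{i+1}=[\mathfrak n,\mathfrak n^i]$; $\mathfrak g^\infty=\bigcap_i\mathfrak g^i$. An LR-structure on a Lie algebra is a bilinear product $\cdot$ on its underlying space with $x\cdot(y\cdot z)=y\cdot(x\cdot z)$, $(x\cdot y)\cdot z=(x\cdot z)\cdot y$ and $x\cdot y-y\cdot x=[x,y]$; it is complete if all right multiplications $y\mapsto y\cdot x$ are nilpotent. $\mathfrak n$ is a subalgebra complementary to the abelian ideal $\mathfrak g^\infty$. *)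

theory Defs
  imports Main "HOL.Vector_Spaces"
begin

definition lie_algebra :: "('k::field \<Rightarrow> 'v::ab_group_add \<Rightarrow> 'v) \<Rightarrow> ('v \<Rightarrow> 'v \<Rightarrow> 'v) \<Rightarrow> bool" where
  "lie_algebra sc br \<longleftrightarrow> vector_space sc
     \<and> (\<forall>x y z. br (x + y) z = br x z + br y z)
     \<and> (\<forall>x y z. br x (y + z) = br x y + br x z)
     \<and> (\<forall>c x y. br (sc c x) y = sc c (br x y))
     \<and> (\<forall>c x y. br x (sc c y) = sc c (br x y))
     \<and> (\<forall>x. br x x = 0)
     \<and> (\<forall>x y z. br x (br y z) + br y (br z x) + br z (br x y) = 0)"

definition fin_dim :: "('k::field \<Rightarrow> 'v::ab_group_add \<Rightarrow> 'v) \<Rightarrow> bool" where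
  "fin_dim sc \<longleftrightarrow> (\<exists>B. finite B \<and> module.span sc B = UNIV)"

definition brk :: "('k::field \<Rightarrow> 'v::ab_group_add \<Rightarrow> 'v) \<Rightarrow> ('v \<Rightarrow> 'v \<Rightarrow> 'v) \<Rightarrow> 'v set \<Rightarrow> 'v set \<Rightarrow> 'v set" where
  "brk sc br A B = module.span sc {br a b | a b. a \<in> A \<and> b \<in> B}"

primrec lcs_aux :: "('k::field \<Rightarrow> 'v::ab_group_add \<Rightarrow> 'v) \<Rightarrow> ('v \<Rightarrow> 'v \<Rightarrow> 'v) \<Rightarrow> 'v set \<Rightarrow> nat \<Rightarrow> 'v set" where
  "lcs_aux sc br S 0 = S"
| "lcs_aux sc br S (Suc i) = brk sc br S (lcs_aux sc br S i)"

text \<open>Lower central series: lcs S 1 = S, lcs S (i+1) = [S, lcs S i] (indices i \<ge> 1).\<close>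
definition lcs :: "('k::field \<Rightarrow> 'v::ab_group_add \<Rightarrow> 'v) \<Rightarrow> ('v \<Rightarrow> 'v \<Rightarrow> 'v) \<Rightarrow> 'v set \<Rightarrow> nat \<Rightarrow> 'v set" where
  "lcs sc br S i = lcs_aux sc br S (i - 1)"

definition ginf :: "('k::field \<Rightarrow> 'v::ab_group_add \<Rightarrow> 'v) \<Rightarrow> ('v \<Rightarrow> 'v \<Rightarrow> 'v) \<Rightarrow> 'v set" where
  "ginf sc br = (\<Inter>i\<in>{1..}. lcs sc br UNIV i)"

definition two_step_solvable :: "('k::field \<Rightarrow> 'v::ab_group_add \<Rightarrow> 'v) \<Rightarrow> ('v \<Rightarrow> 'v \<Rightarrow> 'v) \<Rightarrow> bool" where
  "two_step_solvable sc br \<longleftrightarrow>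
     (\<forall>x\<in>brk sc br UNIV UNIV. \<forall>y\<in>brk sc br UNIV UNIV. br x y = 0)"

definition lie_subalgebra :: "('k::field \<Rightarrow> 'v::ab_group_add \<Rightarrow> 'v) \<Rightarrow> ('v \<Rightarrow> 'v \<Rightarrow> 'v) \<Rightarrow> 'v set \<Rightarrow> bool" where
  "lie_subalgebra sc br N \<longleftrightarrow> module.subspace sc N \<and> (\<forall>x\<in>N. \<forall>y\<in>N. br x y \<in> N)"

definition LR_structure :: "('k::field \<Rightarrow> 'v::ab_group_add \<Rightarrow> 'v) \<Rightarrow> ('v \<Rightarrow> 'v \<Rightarrow> 'v) \<Rightarrow> 'v set \<Rightarrow> ('v \<Rightarrow> 'v \<Rightarrow> 'v) \<Rightarrow> bool" where
  "LR_structure sc br S p \<longleftrightarrow>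
     (\<forall>x\<in>S. \<forall>y\<in>S. p x y \<in> S)
   \<and> (\<forall>x\<in>S. \<forall>y\<in>S. \<forall>z\<in>S. p (x + y) z = p x z + p y z)
   \<and> (\<forall>x\<in>S. \<forall>y\<in>S. \<forall>z\<in>S. p x (y + z) = p x y + p x z)
   \<and> (\<forall>c. \<forall>x\<in>S. \<forall>y\<in>S. p (sc c x) y = sc c (p x y))
   \<and> (\<forall>c. \<forall>x\<in>S. \<forall>y\<in>S. p x (sc c y) = sc c (p x y))
   \<and> (\<forall>x\<in>S. \<forall>y\<in>S. \<forall>z\<in>S. p x (p y z) = p y (p x z))
   \<and> (\<forall>x\<in>S. \<forall>y\<in>S. \<forall>z\<in>S. p (p x y) z = p (p x z) y)
   \<and> (\<forall>x\<in>S. \<forall>y\<in>S. p x y - p y x = br x y)"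

definition complete_LR :: "'v::ab_group_add set \<Rightarrow> ('v \<Rightarrow> 'v \<Rightarrow> 'v) \<Rightarrow> bool" where
  "complete_LR S p \<longleftrightarrow> (\<forall>x\<in>S. \<exists>k. \<forall>y\<in>S. ((\<lambda>u. p u x) ^^ k) y = 0)"

end

theory Submission imports Defs begin

locale LRctx =
  fixes sc :: "'k::field \<Rightarrow> 'v::ab_group_add \<Rightarrow> 'v"
    and br :: "'v \<Rightarrow> 'v \<Rightarrow> 'v"
    and N :: "'v set"
    and p :: "'v \<Rightarrow> 'v \<Rightarrow> 'v"
  assumes lie: "lie_algebra sc br"
    and sub: "lie_subalgebra sc br N"
    and LR: "LR_structure sc br N p"
    and NN: "\<forall>x\<in>N. \<forall>y\<in>N. p x y \<in> brk sc br N N"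
begin

sublocale vector_space sc using lie by (simp add: lie_algebra_def)

lemma br_addL: "br (x + y) z = br x z + br y z" using lie by (simp add: lie_algebra_def)
lemma br_addR: "br x (y + z) = br x y + br x z" using lie by (simp add: lie_algebra_def)
lemma br_scL: "br (sc c x) y = sc c (br x y)" using lie by (simp add: lie_algebra_def)
lemma br_scR: "br x (sc c y) = sc c (br x y)" using lie by (simp add: lie_algebra_def)
lemma br_self: "br x x = 0" using lie by (simp add: lie_algebra_def)
lemma br_jac: "br x (br y z) + br y (br z x) + br z (br x y) = 0" using lie by (simp add: lie_algebra_def)

lemma br_0L: "br 0 y = 0" using br_addL[of 0 0 y] by simp
lemma br_0R: "br x 0 = 0" using br_addR[of x 0 0] by simp
lemma br_anti: "br y x = - br x y"
proof -
  have "br (x+y) (x+y) = 0" by (rule br_self)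
  moreover have "br (x+y) (x+y) = br x x + br x y + (br y x + br y y)" by (simp add: br_addL br_addR)
  ultimately have "br x y + br y x = 0" by (simp add: br_self)
  thus ?thesis by (simp add: eq_neg_iff_add_eq_0 add.commute)
qed
lemma br_jac2: "br (br a b) c = br a (br b c) + br b (br c a)"
  proof -
  have "br (br a b) c + br c (br a b) = 0" using br_anti[of "br a b" c] by simp
  thus ?thesis using br_jac[of a b c] by (metis add.assoc add.commute add_right_cancel add.left_commute add.right_neutral)
qed

lemma N_sub: "subspace N" using sub by (simp add: lie_subalgebra_def)
lemma N_br: "x \<in> N \<Longrightarrow> y \<in> N \<Longrightarrow> br x y \<in> N" using sub by (simp add: lie_subalgebra_def)

lemma pN: "x \<in> N \<Longrightarrow> y \<in> N \<Longrightarrow> p x y \<in> N" using LR by (simp add: LR_structure_def)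
lemma p_addL: "x \<in> N \<Longrightarrow> y \<in> N \<Longrightarrow> z \<in> N \<Longrightarrow> p (x + y) z = p x z + p y z" using LR by (simp add: LR_structure_def)
lemma p_addR: "x \<in> N \<Longrightarrow> y \<in> N \<Longrightarrow> z \<in> N \<Longrightarrow> p x (y + z) = p x y + p x z" using LR by (simp add: LR_structure_def)
lemma p_scL: "x \<in> N \<Longrightarrow> y \<in> N \<Longrightarrow> p (sc c x) y = sc c (p x y)" using LR by (simp add: LR_structure_def)
lemma p_scR: "x \<in> N \<Longrightarrow> y \<in> N \<Longrightarrow> p x (sc c y) = sc c (p x y)" using LR by (simp add: LR_structure_def)
lemma p_lc: "x \<in> N \<Longrightarrow> y \<in> N \<Longrightarrow> z \<in> N \<Longrightarrow> p x (p y z) = p y (p x z)" using LR by (simp add: LR_structure_def)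
lemma p_rc: "x \<in> N \<Longrightarrow> y \<in> N \<Longrightarrow> z \<in> N \<Longrightarrow> p (p x y) z = p (p x z) y" using LR by (simp add: LR_structure_def)
lemma p_br: "x \<in> N \<Longrightarrow> y \<in> N \<Longrightarrow> p x y - p y x = br x y" using LR by (simp add: LR_structure_def)

lemma N0: "0 \<in> N" using N_sub subspace_0 by blast
lemma p_0L: "y \<in> N \<Longrightarrow> p 0 y = 0" using p_addL[of 0 0 y] N0 by simp
lemma p_0R: "x \<in> N \<Longrightarrow> p x 0 = 0" using p_addR[of x 0 0] N0 by simp
lemma p_diffL: assumes "x \<in> N" "y \<in> N" "z \<in> N" shows "p (x - y) z = p x z - p y z"
proof -
  have "x - y \<in> N" using assms N_sub subspace_diff by blast
  hence "p ((x - y) + y) z = p (x - y) z + p y z" using assms p_addL by blast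
  thus ?thesis by (simp add: algebra_simps)
qed
lemma p_diffR: assumes "x \<in> N" "y \<in> N" "z \<in> N" shows "p x (y - z) = p x y - p x z"
proof -
  have "y - z \<in> N" using assms N_sub subspace_diff by blast
  hence "p x ((y - z) + z) = p x (y - z) + p x z" using assms p_addR by blast
  thus ?thesis by (simp add: algebra_simps)
qed

lemma p_deriv: assumes "x \<in> N" "a \<in> N" "b \<in> N"
  shows "p x (br a b) = br (p x a) b + br a (p x b)"
proof -
  have xa: "p x a \<in> N" and xb: "p x b \<in> N" and ab: "p a b \<in> N" and ba: "p b a \<in> N"
    using assms pN by auto
  have "p x (br a b) = p x (p a b - p b a)" using p_br assms by simp
  also have "\<dots> = p x (p a b) - p x (p b a)" using p_diffR assms ab ba by blast
  also have "\<dots> = p a (p x b) - p b (p x a)" using p_lc assms by simp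
  finally have 1: "p x (br a b) = p a (p x b) - p b (p x a)" .
  have 2: "br (p x a) b = p (p x a) b - p b (p x a)" using p_br xa assms by simp
  have 3: "br a (p x b) = p a (p x b) - p (p x b) a" using p_br xb assms by simp
  have 4: "p (p x a) b = p (p x b) a" using p_rc assms by simp
  show ?thesis using 1 2 3 4 by (metis add_diff_cancel diff_add_cancel add.commute add.left_commute diff_diff_eq2 diff_add_eq)
qed

lemma p_brL: assumes "a \<in> N" "b \<in> N" "y \<in> N"
  shows "p (br a b) y = br a (p b y) - br b (p a y)"
proof -
  have ay: "p a y \<in> N" and by': "p b y \<in> N" and ab: "p a b \<in> N" and ba: "p b a \<in> N"
    using assms pN by auto
  have "p (br a b) y = p (p a b - p b a) y" using p_br assms by simp
  also have "\<dots> = p (p a b) y - p (p b a) y" using p_diffL assms ab ba by blast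
  also have "\<dots> = p (p a y) b - p (p b y) a" using p_rc assms by simp
  finally have 1: "p (br a b) y = p (p a y) b - p (p b y) a" .
  have 2: "br a (p b y) = p a (p b y) - p (p b y) a" using p_br by' assms by simp
  have 3: "br b (p a y) = p b (p a y) - p (p a y) b" using p_br ay assms by simp
  have 4: "p a (p b y) = p b (p a y)" using p_lc assms by simp
  show ?thesis unfolding 1 2 3 4 by (simp add: algebra_simps)
qed

abbreviation "A \<equiv> lcs_aux sc br N"

lemma A_Suc: "A (Suc i) = span {br a b | a b. a \<in> N \<and> b \<in> A i}"
  by (simp add: brk_def)

lemma A1: "A (Suc 0) = brk sc br N N" by simp

declare lcs_aux.simps(2)[simp del]

lemma A_gen: "a \<in> N \<Longrightarrow> b \<in> A i \<Longrightarrow> br a b \<in> A (Suc i)"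
  unfolding A_Suc by (rule span_base) blast

lemma A_subspace: "subspace (A i)"
  by (cases i) (simp_all add: N_sub A_Suc)

lemma A_sub: "A i \<subseteq> N"
proof (induction i)
  case 0 then show ?case by simp
next
  case (Suc i)
  show ?case unfolding A_Suc
    by (rule span_minimal) (use Suc N_br N_sub in auto)
qed

lemma A_br: "x \<in> A i \<Longrightarrow> y \<in> A j \<Longrightarrow> br x y \<in> A (Suc (i + j))"
proof (induction i arbitrary: j x y)
  case 0 then show ?case using A_gen by simp
next
  case (Suc i)
  let ?T = "{x. \<forall>j. \<forall>y\<in>A j. br x y \<in> A (Suc (Suc i + j))}"
  have "span {br a b | a b. a \<in> N \<and> b \<in> A i} \<subseteq> ?T"
  proof (rule span_minimal)
    show "subspace ?T"
    proof (rule subspaceI)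
      show "0 \<in> ?T" using br_0L A_subspace subspace_0 by auto
      fix y z assume "y \<in> ?T" "z \<in> ?T"
      then show "y + z \<in> ?T" using br_addL subspace_add A_subspace by auto
    next
      fix c y assume "y \<in> ?T"
      then show "sc c y \<in> ?T" using br_scL subspace_scale A_subspace by auto
    qed
    show "{br a b | a b. a \<in> N \<and> b \<in> A i} \<subseteq> ?T"
    proof clarify
      fix a b j y assume a: "a \<in> N" and b: "b \<in> A i" and y: "y \<in> A j"
      have 1: "br a (br b y) \<in> A (Suc (Suc i + j))" using A_gen[OF a Suc.IH[OF b y]] by simp
      have "br a y \<in> A (Suc j)" using A_gen[OF a y] .
      hence "br y a \<in> A (Suc j)" using br_anti[where x=a and y=y] A_subspace subspace_neg by metis
      hence 2: "br b (br y a) \<in> A (Suc (Suc i + j))" using Suc.IH[OF b, of "br y a" "Suc j"] by simp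
      show "br (br a b) y \<in> A (Suc (Suc i + j))"
        unfolding br_jac2 using 1 2 A_subspace subspace_add by blast
    qed
  qed
  then show ?case using Suc.prems A_Suc by blast
qed

lemma pA0: "x \<in> N \<Longrightarrow> y \<in> N \<Longrightarrow> p x y \<in> A (Suc 0)" using NN A1 by simp

lemma pNA: "x \<in> N \<Longrightarrow> y \<in> A j \<Longrightarrow> p x y \<in> A (Suc j)"
proof (induction j arbitrary: x y)
  case 0 then show ?case using pA0 by simp
next
  case (Suc j)
  let ?T = "{y. y \<in> N \<and> (\<forall>x\<in>N. p x y \<in> A (Suc (Suc j)))}"
  have "span {br a b | a b. a \<in> N \<and> b \<in> A j} \<subseteq> ?T"
  proof (rule span_minimal)
    show "subspace ?T"
    proof (rule subspaceI)
      show "0 \<in> ?T" using N0 p_0R A_subspace subspace_0 by auto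
      fix y z assume "y \<in> ?T" "z \<in> ?T"
      then show "y + z \<in> ?T" using p_addR N_sub subspace_add A_subspace by auto
    next
      fix c y assume "y \<in> ?T"
      then show "sc c y \<in> ?T" using p_scR N_sub subspace_scale A_subspace by auto
    qed
    show "{br a b | a b. a \<in> N \<and> b \<in> A j} \<subseteq> ?T"
    proof (rule subsetI)
      fix z assume "z \<in> {br a b | a b. a \<in> N \<and> b \<in> A j}"
      then obtain a b where z: "z = br a b" and a: "a \<in> N" and b: "b \<in> A j" by blast
      have bN: "b \<in> N" using b A_sub by blast
      have zN: "br a b \<in> N" using N_br a bN by blast
      have "p x (br a b) \<in> A (Suc (Suc j))" if x: "x \<in> N" for x
      proof -
        have 1: "br (p x a) b \<in> A (Suc (Suc j))" using A_br[OF pA0[OF x a] b] by simp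
        have 2: "br a (p x b) \<in> A (Suc (Suc j))" using A_gen[OF a Suc.IH[OF x b]] .
        show ?thesis
          unfolding p_deriv[OF x a bN] using 1 2 A_subspace subspace_add by blast
      qed
      then show "z \<in> ?T" using z zN by blast
    qed
  qed
  then show ?case using Suc.prems A_Suc by blast
qed

lemma pAA: "x \<in> A i \<Longrightarrow> y \<in> A j \<Longrightarrow> p x y \<in> A (Suc (i + j))"
proof (induction i arbitrary: j x y)
  case 0 then show ?case using pNA by simp
next
  case (Suc i)
  let ?T = "{x. x \<in> N \<and> (\<forall>j. \<forall>y\<in>A j. p x y \<in> A (Suc (Suc i + j)))}"
  have "span {br a b | a b. a \<in> N \<and> b \<in> A i} \<subseteq> ?T"
  proof (rule span_minimal)
    show "subspace ?T"
    proof (rule subspaceI)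
      show "0 \<in> ?T" using N0 p_0L A_subspace subspace_0 A_sub by (simp add: subset_iff)
      fix y z assume "y \<in> ?T" "z \<in> ?T"
      then have yN: "y \<in> N" and zN: "z \<in> N" and yT: "\<forall>j. \<forall>w\<in>A j. p y w \<in> A (Suc (Suc i + j))"
        and zT: "\<forall>j. \<forall>w\<in>A j. p z w \<in> A (Suc (Suc i + j))" by auto
      have "p (y + z) w \<in> A (Suc (Suc i + j))" if w: "w \<in> A j" for j w
      proof -
        have "w \<in> N" using w A_sub by blast
        then have "p (y + z) w = p y w + p z w" using p_addL yN zN by blast
        then show ?thesis using yT zT w subspace_add[OF A_subspace] by simp
      qed
      then show "y + z \<in> ?T" using yN zN N_sub subspace_add by blast
    next
      fix c y assume "y \<in> ?T"
      then have yN: "y \<in> N" and yT: "\<forall>j. \<forall>w\<in>A j. p y w \<in> A (Suc (Suc i + j))" by auto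
      have "p (sc c y) w \<in> A (Suc (Suc i + j))" if w: "w \<in> A j" for j w
      proof -
        have "w \<in> N" using w A_sub by blast
        then have "p (sc c y) w = sc c (p y w)" using p_scL yN by blast
        then show ?thesis using yT w subspace_scale[OF A_subspace] by simp
      qed
      then show "sc c y \<in> ?T" using yN N_sub subspace_scale by blast
    qed
    show "{br a b | a b. a \<in> N \<and> b \<in> A i} \<subseteq> ?T"
    proof (rule subsetI)
      fix z assume "z \<in> {br a b | a b. a \<in> N \<and> b \<in> A i}"
      then obtain a b where z: "z = br a b" and a: "a \<in> N" and b: "b \<in> A i" by blast
      have bN: "b \<in> N" using b A_sub by blast
      have zN: "br a b \<in> N" using N_br a bN by blast
      have "p (br a b) y \<in> A (Suc (Suc i + j))" if y: "y \<in> A j" for j y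
      proof -
        have yN: "y \<in> N" using y A_sub by blast
        have 1: "br a (p b y) \<in> A (Suc (Suc i + j))" using A_gen[OF a Suc.IH[OF b y]] by simp
        have 2: "br b (p a y) \<in> A (Suc (Suc i + j))" using A_br[OF b pNA[OF a y]] by simp
        show ?thesis
          unfolding p_brL[OF a bN yN] using 1 2 A_subspace subspace_diff by blast
      qed
      then show "z \<in> ?T" using z zN by blast
    qed
  qed
  then show ?case using Suc.prems A_Suc by blast
qed


lemma br_negR: "br x (- y) = - br x y"
  using br_addR[of x y "- y"] br_0R by (simp add: eq_neg_iff_add_eq_0 add.commute)
lemma br_negL: "br (- x) y = - br x y"
  using br_addL[of x "- x" y] br_0L by (simp add: eq_neg_iff_add_eq_0 add.commute)

lemma A_anti: "A (Suc i) \<subseteq> A i"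
proof (induction i)
  case 0 show ?case using A_sub by simp
next
  case (Suc i)
  have "A (Suc (Suc i)) = span {br a b | a b. a \<in> N \<and> b \<in> A (Suc i)}" by (rule A_Suc)
  also have "\<dots> \<subseteq> span {br a b | a b. a \<in> N \<and> b \<in> A i}" by (rule span_mono) (use Suc in blast)
  also have "\<dots> = A (Suc i)" by (rule A_Suc[symmetric])
  finally show ?case .
qed

lemma A_anti': "i \<le> j \<Longrightarrow> A j \<subseteq> A i"
  using lift_Suc_antimono_le[of A, OF A_anti] by blast

abbreviation "G \<equiv> lcs_aux sc br UNIV"

lemma G_Suc: "G (Suc i) = span {br a b | a b. a \<in> UNIV \<and> b \<in> G i}"
  by (simp add: brk_def lcs_aux.simps(2))

lemma G_gen: "b \<in> G i \<Longrightarrow> br a b \<in> G (Suc i)"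
  unfolding G_Suc by (rule span_base) blast

lemma G_subspace: "subspace (G i)"
  by (cases i) (simp_all add: G_Suc)

lemma G_anti: "G (Suc i) \<subseteq> G i"
proof (induction i)
  case 0 show ?case by simp
next
  case (Suc i)
  have "G (Suc (Suc i)) = span {br a b | a b. a \<in> UNIV \<and> b \<in> G (Suc i)}" by (rule G_Suc)
  also have "\<dots> \<subseteq> span {br a b | a b. a \<in> UNIV \<and> b \<in> G i}" by (rule span_mono) (use Suc in blast)
  also have "\<dots> = G (Suc i)" by (rule G_Suc[symmetric])
  finally show ?case .
qed

lemma G_anti': "i \<le> j \<Longrightarrow> G j \<subseteq> G i"
  using lift_Suc_antimono_le[of G, OF G_anti] by blast

lemma A_G: "A i \<subseteq> G i"
proof (induction i)
  case 0 show ?case by simp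
next
  case (Suc i) show ?case unfolding G_Suc A_Suc by (rule span_mono) (use Suc in blast)
qed

lemma ginf_eq: "ginf sc br = (\<Inter>i. G i)"
proof (rule equalityI)
  show "ginf sc br \<subseteq> (\<Inter>i. G i)"
  proof
    fix x assume "x \<in> ginf sc br"
    hence "\<forall>i\<ge>1. x \<in> G (i - 1)" by (auto simp: ginf_def lcs_def)
    hence "x \<in> G i" for i using spec[of _ "Suc i"] by (metis diff_Suc_1 le_add1 plus_1_eq_Suc)
    thus "x \<in> (\<Inter>i. G i)" by blast
  qed
  show "(\<Inter>i. G i) \<subseteq> ginf sc br" by (auto simp: ginf_def lcs_def)
qed

lemma ginf_subspace: "subspace (ginf sc br)"
  unfolding ginf_eq by (rule subspace_Int) (rule G_subspace)

lemma ginf_ideal: "c \<in> ginf sc br \<Longrightarrow> br x c \<in> ginf sc br"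
  unfolding ginf_eq
proof (clarsimp)
  fix i assume c: "\<forall>i. c \<in> G i"
  show "br x c \<in> G i"
  proof (cases i)
    case 0 then show ?thesis by simp
  next
    case (Suc k) then show ?thesis using G_gen c by blast
  qed
qed

lemma G1: "G (Suc 0) = brk sc br UNIV UNIV" by (simp add: lcs_aux.simps(2))

lemma ginf_brk: "ginf sc br \<subseteq> brk sc br UNIV UNIV"
  unfolding ginf_eq G1[symmetric] by blast

lemma br_brk: "br u v \<in> brk sc br UNIV UNIV"
  unfolding brk_def by (rule span_base) blast

lemma p_brk: "x \<in> N \<Longrightarrow> y \<in> N \<Longrightarrow> p x y \<in> brk sc br UNIV UNIV"
proof -
  assume "x \<in> N" "y \<in> N"
  hence "p x y \<in> brk sc br N N" using NN by blast
  moreover have "brk sc br N N \<subseteq> brk sc br UNIV UNIV" unfolding brk_def by (rule span_mono) blast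
  ultimately show ?thesis by blast
qed

end

locale LRctx2 = LRctx +
  assumes fd: "fin_dim sc"
    and solv: "two_step_solvable sc br"
    and compl_int: "N \<inter> ginf sc br = {0}"
    and compl_sum: "\<forall>v. \<exists>a\<in>ginf sc br. \<exists>x\<in>N. v = a + x"
begin

lemma nilp: "\<exists>K. A K = {0}"
proof -
  obtain B where B: "finite B" "span B = UNIV" using fd by (auto simp: fin_dim_def)
  obtain B' where B': "independent B'" "UNIV \<subseteq> span B'"
    using maximal_independent_subset[of UNIV] by blast
  have fB': "finite B'" using independent_span_bound[OF B(1) B'(1)] B(2) by simp
  interpret fdv: finite_dimensional_vector_space sc B'
    by unfold_locales (use fB' B' in auto)
  obtain k where k: "\<forall>i. dim (G k) \<le> dim (G i)"
    using ex_has_least_nat[of "\<lambda>_. True" 0 "\<lambda>i. dim (G i)"] by auto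
  have Gk: "G (Suc k) = G k"
    by (rule fdv.subspace_dim_equal[OF G_subspace G_subspace G_anti]) (use k in blast)
  have Gkn: "G (k + n) = G k" for n
  proof (induction n)
    case 0 show ?case by simp
  next
    case (Suc n)
    have "G (k + Suc n) = G (Suc (k + n))" by simp
    also have "\<dots> = G (Suc k)" unfolding G_Suc Suc by simp
    finally show ?case using Gk by simp
  qed
  have "G k \<subseteq> ginf sc br"
    unfolding ginf_eq
  proof (rule INT_greatest)
    fix i show "G k \<subseteq> G i"
    proof (cases "i \<le> k")
      case True then show ?thesis using G_anti' by blast
    next
      case False
      then have "i = k + (i - k)" by simp
      then show ?thesis using Gkn by (metis order_refl)
    qed
  qed
  then have "A k \<subseteq> {0}" using A_G[of k] A_sub[of k] compl_int by blast
  moreover have "0 \<in> A k" using A_subspace subspace_0 by blast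
  ultimately show ?thesis by blast
qed

lemma solv': "u \<in> brk sc br UNIV UNIV \<Longrightarrow> v \<in> brk sc br UNIV UNIV \<Longrightarrow> br u v = 0"
  using solv by (simp add: two_step_solvable_def)

lemma uniq:
  assumes "a \<in> ginf sc br" "a' \<in> ginf sc br" "x \<in> N" "x' \<in> N" "a + x = a' + x'"
  shows "a = a' \<and> x = x'"
proof -
  have e: "a - a' = x' - x" using assms(5) by (simp add: algebra_simps)
  have "a - a' \<in> ginf sc br" using assms ginf_subspace subspace_diff by blast
  moreover have "x' - x \<in> N" using assms N_sub subspace_diff by blast
  ultimately have "x' - x \<in> N \<inter> ginf sc br" using e by simp
  hence "x' - x = 0" using compl_int by blast
  hence "a - a' = 0" using e by simp
  then show ?thesis using e by simp
qed

theorem part1: "\<forall>i\<ge>1. \<forall>j\<ge>1. \<forall>x\<in>lcs sc br N i. \<forall>y\<in>lcs sc br N j. p x y \<in> lcs sc br N (i + j)"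
proof (intro allI impI ballI)
  fix i j x y assume i: "1 \<le> i" and j: "1 \<le> j" and x: "x \<in> lcs sc br N i" and y: "y \<in> lcs sc br N j"
  have "p x y \<in> A (Suc ((i - 1) + (j - 1)))" using pAA x y unfolding lcs_def by blast
  moreover have "Suc ((i - 1) + (j - 1)) = i + j - 1" using i j by simp
  ultimately show "p x y \<in> lcs sc br N (i + j)" unfolding lcs_def by metis
qed

theorem part2:
  assumes H: "\<forall>a\<in>ginf sc br. \<forall>b\<in>ginf sc br. \<forall>x\<in>N. \<forall>y\<in>N. star (a + x) (b + y) = br x b + p x y"
  shows "LR_structure sc br UNIV star \<and> complete_LR UNIV star"
proof -
  obtain ga where ga: "\<And>v. ga v \<in> ginf sc br \<and> (\<exists>x\<in>N. v = ga v + x)"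
    using compl_sum by metis
  define na where "na v = v - ga v" for v
  have gaG: "ga v \<in> ginf sc br" for v using ga by blast
  have naN: "na v \<in> N" for v using ga[of v] by (metis add_diff_cancel_left' na_def)
  have rec: "ga v + na v = v" for v by (simp add: na_def)
  have dec_eq: "ga (a + x) = a \<and> na (a + x) = x" if "a \<in> ginf sc br" "x \<in> N" for a x
    using uniq[OF gaG that(1) naN that(2)] rec[of "a + x"] by simp
  have S: "star u v = br (na u) (ga v) + p (na u) (na v)" for u v
  proof -
    have "star (ga u + na u) (ga v + na v) = br (na u) (ga v) + p (na u) (na v)"
      using H gaG naN by blast
    then show ?thesis by (simp add: rec)
  qed
  have ga_add: "ga (u + v) = ga u + ga v" and na_add: "na (u + v) = na u + na v" for u v
  proof -
    have "ga u + ga v \<in> ginf sc br" using gaG ginf_subspace subspace_add by blast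
    moreover have "na u + na v \<in> N" using naN N_sub subspace_add by blast
    moreover have "u + v = (ga u + ga v) + (na u + na v)" using rec[of u] rec[of v] by (simp add: algebra_simps)
    ultimately show "ga (u + v) = ga u + ga v" "na (u + v) = na u + na v" using dec_eq by simp_all
  qed
  have ga_sc: "ga (sc c u) = sc c (ga u)" and na_sc: "na (sc c u) = sc c (na u)" for c u
  proof -
    have "sc c (ga u) \<in> ginf sc br" using gaG ginf_subspace subspace_scale by blast
    moreover have "sc c (na u) \<in> N" using naN N_sub subspace_scale by blast
    moreover have "sc c u = sc c (ga u) + sc c (na u)" using rec[of u] scale_right_distrib[of c "ga u" "na u"] by simp
    ultimately show "ga (sc c u) = sc c (ga u)" "na (sc c u) = sc c (na u)" using dec_eq by simp_all
  qed
  have na_star: "na (star u v) = p (na u) (na v)" and ga_star: "ga (star u v) = br (na u) (ga v)" for u v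
    using dec_eq[OF ginf_ideal[OF gaG] pN[OF naN naN]] S by simp_all
  have LR2: "LR_structure sc br UNIV star"
    unfolding LR_structure_def
  proof (intro conjI ballI allI)
    fix u v w
    show "star (u + v) w = star u w + star v w"
      unfolding S na_add by (simp add: br_addL p_addL naN algebra_simps)
    show "star u (v + w) = star u v + star u w"
      unfolding S na_add ga_add by (simp add: br_addR p_addR naN algebra_simps)
    fix c
    show "star (sc c u) v = sc c (star u v)"
      unfolding S na_sc by (simp add: br_scL p_scL naN scale_right_distrib)
    show "star u (sc c v) = sc c (star u v)"
      unfolding S na_sc ga_sc by (simp add: br_scR p_scR naN scale_right_distrib)
  next
    fix u v w
    let ?x = "na u" and ?y = "na v" and ?z = "na w" and ?c = "ga w"
    have "br (br ?x ?y) ?c = 0" using solv' br_brk ginf_brk gaG by blast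
    moreover have "br (br ?x ?y) ?c = br ?x (br ?y ?c) + br ?y (br ?c ?x)" by (rule br_jac2)
    moreover have "br ?y (br ?c ?x) = - br ?y (br ?x ?c)"
      using br_anti[where x = ?x and y = ?c] br_negR by simp
    ultimately have "br ?x (br ?y ?c) - br ?y (br ?x ?c) = 0" by simp
    hence j: "br ?x (br ?y ?c) = br ?y (br ?x ?c)" by simp
    show "star u (star v w) = star v (star u w)"
      unfolding S[of u "star v w"] S[of v "star u w"] na_star ga_star
      using j p_lc naN by simp
  next
    fix u v w
    have 1: "br (p (na u) (na v)) (ga w) = 0" using solv' p_brk naN ginf_brk gaG by blast
    have 2: "br (p (na u) (na w)) (ga v) = 0" using solv' p_brk naN ginf_brk gaG by blast
    show "star (star u v) w = star (star u w) v"
      unfolding S[of "star u v" w] S[of "star u w" v] na_star 1 2 using p_rc naN by simp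
  next
    fix u v
    have ab: "br (ga u) (ga v) = 0" using solv' ginf_brk gaG by blast
    have "br u v = br (ga u + na u) (ga v + na v)" using rec by simp
    also have "\<dots> = br (ga u) (ga v) + br (ga u) (na v) + (br (na u) (ga v) + br (na u) (na v))"
      by (simp add: br_addL br_addR)
    also have "\<dots> = br (na u) (ga v) - br (na v) (ga u) + (p (na u) (na v) - p (na v) (na u))"
      using ab br_anti[where x = "na v" and y = "ga u"] p_br[OF naN naN] by simp
    finally show "star u v - star v u = br u v" unfolding S by (simp add: algebra_simps)
  qed (auto)
  have "complete_LR UNIV star"
    unfolding complete_LR_def
  proof (intro ballI)
    fix w
    let ?R = "\<lambda>u. star u w"
    have it: "\<exists>a\<in>ginf sc br. \<exists>x\<in>A n. (?R ^^ n) u = a + x" for n u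
    proof (induction n)
      case 0 show ?case using gaG naN rec by (metis lcs_aux.simps(1) funpow_0)
    next
      case (Suc n)
      then obtain a x where a: "a \<in> ginf sc br" and x: "x \<in> A n" and e: "(?R ^^ n) u = a + x" by blast
      have xN: "x \<in> N" using x A_sub by blast
      have "(?R ^^ Suc n) u = star (a + x) (ga w + na w)" using e rec by simp
      also have "\<dots> = br x (ga w) + p x (na w)" using H a gaG xN naN by blast
      finally show ?case using ginf_ideal[OF gaG] pAA[OF x, of "na w" 0] naN by auto
    qed
    obtain K where K: "A K = {0}" using nilp by blast
    have "(?R ^^ Suc K) u = 0" for u
    proof -
      obtain a x where a: "a \<in> ginf sc br" and x: "x \<in> A K" and e: "(?R ^^ K) u = a + x"
        using it by blast
      have "x = 0" using x K by blast
      have "(?R ^^ Suc K) u = star (a + 0) (ga w + na w)" using e rec \<open>x = 0\<close> by simp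
      also have "\<dots> = br 0 (ga w) + p 0 (na w)" using H a gaG N0 naN by blast
      finally show ?thesis using br_0L p_0L naN by simp
    qed
    then show "\<exists>k. \<forall>y\<in>UNIV. (?R ^^ k) y = 0" by blast
  qed
  with LR2 show ?thesis by blast
qed

end

theorem mainTheorem12:
  fixes sc :: "'k::field_char_0 \<Rightarrow> 'v::ab_group_add \<Rightarrow> 'v"
    and br :: "'v \<Rightarrow> 'v \<Rightarrow> 'v"
    and N :: "'v set"
    and p :: "'v \<Rightarrow> 'v \<Rightarrow> 'v"
  assumes lie: "lie_algebra sc br"
    and fd: "fin_dim sc"
    and solv: "two_step_solvable sc br"
    and sub: "lie_subalgebra sc br N"
    and compl_int: "N \<inter> ginf sc br = {0}"
    and compl_sum: "\<forall>v. \<exists>a\<in>ginf sc br. \<exists>x\<in>N. v = a + x"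
    and LR: "LR_structure sc br N p"
    and NN: "\<forall>x\<in>N. \<forall>y\<in>N. p x y \<in> brk sc br N N"
  shows "(\<forall>i\<ge>1. \<forall>j\<ge>1. \<forall>x\<in>lcs sc br N i. \<forall>y\<in>lcs sc br N j. p x y \<in> lcs sc br N (i + j))
    \<and> (\<forall>star. (\<forall>a\<in>ginf sc br. \<forall>b\<in>ginf sc br. \<forall>x\<in>N. \<forall>y\<in>N.
                  star (a + x) (b + y) = br x b + p x y)
             \<longrightarrow> LR_structure sc br UNIV star \<and> complete_LR UNIV star)"
proof -
  interpret LRctx2 sc br N p
    by (unfold_locales) (use assms in auto)
  show ?thesis using part1 part2 by blast
qed

end
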